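(* Let $(X,m)$ be a $\sigma$-finite measure space and let $Q$ with domain $\mathcal D$ and $Q^\#$ with domain $\mathcal D^\#$ be Dirichlet forms on $L^2(X,m)$ such that $\mathcal D\subseteq\mathcal D^\#$ and $Q^\#=Q$ on $\mathcal D\times\mathcal D$. Then the following are equivalent: (i) $\mathcal D=\mathcal D^\#$; (ii) there is no nontrivial $u\in D(L')$ with $L'u=-u$.
   Context: A Dirichlet form on $L^2(X,m)$ is a densely defined, nonnegative, closed, symmetric bilinear form satisfying the contraction property. $\langle\cdot,\cdot\rangle$ denotes the $L^2(X,m)$ inner product. The operator $L'$ has domain $D(L')=\{u\in\mathcal D^\#\mid \exists w\in L^2(X,m)\text{ with } Q^\#(u,v)=\langle w,v\rangle\text{ for all }v\in\mathcal D\}$ and acts by $L'u=w$. *)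

theory Defs
  imports "HOL-Analysis.Analysis"
begin

text \<open>Real-valued L^2(X,m), realised on representative functions.
  Elements of L^2 are identified when equal m-a.e.\<close>

definition L2 :: "'a measure \<Rightarrow> ('a \<Rightarrow> real) set" where
  "L2 M = {f. f \<in> borel_measurable M \<and> integrable M (\<lambda>x. (f x)\<^sup>2)}"

definition l2_inner :: "'a measure \<Rightarrow> ('a \<Rightarrow> real) \<Rightarrow> ('a \<Rightarrow> real) \<Rightarrow> real" where
  "l2_inner M f g = (\<integral>x. f x * g x \<partial>M)"

definition l2_normsq :: "'a measure \<Rightarrow> ('a \<Rightarrow> real) \<Rightarrow> real" where
  "l2_normsq M f = (\<integral>x. (f x)\<^sup>2 \<partial>M)"

definition normal_contraction :: "(real \<Rightarrow> real) \<Rightarrow> bool" where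
  "normal_contraction C \<longleftrightarrow> C 0 = 0 \<and> (\<forall>s t. \<bar>C s - C t\<bar> \<le> \<bar>s - t\<bar>)"

definition form_normsq ::
  "'a measure \<Rightarrow> (('a \<Rightarrow> real) \<Rightarrow> ('a \<Rightarrow> real) \<Rightarrow> real) \<Rightarrow> ('a \<Rightarrow> real) \<Rightarrow> real" where
  "form_normsq M Q u = Q u u + l2_normsq M u"

text \<open>A Dirichlet form (Q, D) on L^2(X,m): D is a (a.e.-saturated) linear subspace of L^2,
  Q is a well-defined (on a.e.-classes) symmetric bilinear nonnegative form on D,
  D is dense in L^2, the form is closed (D complete w.r.t. the form norm), and
  the contraction property holds for all normal contractions.\<close>
definition dirichlet_form ::
  "'a measure \<Rightarrow> ('a \<Rightarrow> real) set \<Rightarrow> (('a \<Rightarrow> real) \<Rightarrow> ('a \<Rightarrow> real) \<Rightarrow> real) \<Rightarrow> bool" where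
  "dirichlet_form M D Q \<longleftrightarrow>
     D \<subseteq> L2 M
   \<and> (\<forall>u\<in>D. \<forall>v. v \<in> borel_measurable M \<and> (AE x in M. u x = v x) \<longrightarrow> v \<in> D)
   \<and> (\<lambda>x. 0) \<in> D
   \<and> (\<forall>u\<in>D. \<forall>v\<in>D. (\<lambda>x. u x + v x) \<in> D)
   \<and> (\<forall>u\<in>D. \<forall>a::real. (\<lambda>x. a * u x) \<in> D)
   \<and> (\<forall>u\<in>D. \<forall>u'\<in>D. \<forall>v\<in>D. (AE x in M. u x = u' x) \<longrightarrow> Q u v = Q u' v)
   \<and> (\<forall>u\<in>D. \<forall>v\<in>D. Q u v = Q v u)
   \<and> (\<forall>u\<in>D. \<forall>v\<in>D. \<forall>w\<in>D. \<forall>a b::real.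
        Q (\<lambda>x. a * u x + b * v x) w = a * Q u w + b * Q v w)
   \<and> (\<forall>u\<in>D. Q u u \<ge> 0)
   \<and> (\<forall>f\<in>L2 M. \<forall>e>0. \<exists>u\<in>D. l2_normsq M (\<lambda>x. f x - u x) < e)
   \<and> (\<forall>s. (\<forall>n. s n \<in> D) \<and>
          (\<forall>e>0. \<exists>N. \<forall>n\<ge>N. \<forall>k\<ge>N. form_normsq M Q (\<lambda>x. s n x - s k x) < e)
        \<longrightarrow> (\<exists>u\<in>D. (\<lambda>n. form_normsq M Q (\<lambda>x. s n x - u x)) \<longlonglongrightarrow> 0))
   \<and> (\<forall>C. normal_contraction C \<longrightarrow>
        (\<forall>u\<in>D. (\<lambda>x. C (u x)) \<in> D \<and> Q (\<lambda>x. C (u x)) (\<lambda>x. C (u x)) \<le> Q u u))"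

text \<open>Graph of the operator L': D(L') = {u \<in> D# | \<exists>w \<in> L^2. Q#(u,v) = <w,v> for all v \<in> D},
  L'u = w.  (w is unique up to a.e. equality since D is dense.)\<close>
definition Lprime_graph ::
  "'a measure \<Rightarrow> ('a \<Rightarrow> real) set \<Rightarrow> ('a \<Rightarrow> real) set
   \<Rightarrow> (('a \<Rightarrow> real) \<Rightarrow> ('a \<Rightarrow> real) \<Rightarrow> real) \<Rightarrow> (('a \<Rightarrow> real) \<times> ('a \<Rightarrow> real)) set" where
  "Lprime_graph M D Dsharp Qsharp =
     {(u, w). u \<in> Dsharp \<and> w \<in> L2 M \<and> (\<forall>v\<in>D. Qsharp u v = l2_inner M w v)}"

end

theory Submission
  imports Defs
begin

definition lc :: "real \<Rightarrow> ('a \<Rightarrow> real) \<Rightarrow> real \<Rightarrow> ('a \<Rightarrow> real) \<Rightarrow> ('a \<Rightarrow> real)" where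
  "lc a u b v = (\<lambda>x. a * u x + b * v x)"

definition BB :: "'a measure \<Rightarrow> (('a\<Rightarrow>real)\<Rightarrow>('a\<Rightarrow>real)\<Rightarrow>real) \<Rightarrow> ('a\<Rightarrow>real) \<Rightarrow> ('a\<Rightarrow>real) \<Rightarrow> real" where
  "BB M Q u v = Q u v + (\<integral>x. u x * v x \<partial>M)"

lemma dfc:
  assumes "dirichlet_form M D Q"
  shows "D \<subseteq> L2 M"
   "(\<forall>u\<in>D. \<forall>v. v \<in> borel_measurable M \<and> (AE x in M. u x = v x) \<longrightarrow> v \<in> D)"
   "(\<lambda>x. 0) \<in> D"
   "(\<forall>u\<in>D. \<forall>v\<in>D. (\<lambda>x. u x + v x) \<in> D)"
   "(\<forall>u\<in>D. \<forall>a::real. (\<lambda>x. a * u x) \<in> D)"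
   "(\<forall>u\<in>D. \<forall>v\<in>D. Q u v = Q v u)"
   "(\<forall>u\<in>D. \<forall>v\<in>D. \<forall>w\<in>D. \<forall>a b::real.
        Q (\<lambda>x. a * u x + b * v x) w = a * Q u w + b * Q v w)"
   "(\<forall>u\<in>D. Q u u \<ge> 0)"
   "(\<forall>s. (\<forall>n. s n \<in> D) \<and>
          (\<forall>e>0. \<exists>N. \<forall>n\<ge>N. \<forall>k\<ge>N. form_normsq M Q (\<lambda>x. s n x - s k x) < e)
        \<longrightarrow> (\<exists>u\<in>D. (\<lambda>n. form_normsq M Q (\<lambda>x. s n x - u x)) \<longlonglongrightarrow> 0))"
proof -
  note h = assms[unfolded dirichlet_form_def]
  show "D \<subseteq> L2 M" using h by (elim conjE)
  show "(\<forall>u\<in>D. \<forall>v. v \<in> borel_measurable M \<and> (AE x in M. u x = v x) \<longrightarrow> v \<in> D)" using h by (elim conjE)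
  show "(\<lambda>x. 0) \<in> D" using h by (elim conjE)
  show "(\<forall>u\<in>D. \<forall>v\<in>D. (\<lambda>x. u x + v x) \<in> D)" using h by (elim conjE)
  show "(\<forall>u\<in>D. \<forall>a::real. (\<lambda>x. a * u x) \<in> D)" using h by (elim conjE)
  show "(\<forall>u\<in>D. \<forall>v\<in>D. Q u v = Q v u)" using h by (elim conjE)
  show "(\<forall>u\<in>D. \<forall>v\<in>D. \<forall>w\<in>D. \<forall>a b::real.
        Q (\<lambda>x. a * u x + b * v x) w = a * Q u w + b * Q v w)" using h by (elim conjE)
  show "(\<forall>u\<in>D. Q u u \<ge> 0)" using h by (elim conjE)
  show "(\<forall>s. (\<forall>n. s n \<in> D) \<and>
          (\<forall>e>0. \<exists>N. \<forall>n\<ge>N. \<forall>k\<ge>N. form_normsq M Q (\<lambda>x. s n x - s k x) < e)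
        \<longrightarrow> (\<exists>u\<in>D. (\<lambda>n. form_normsq M Q (\<lambda>x. s n x - u x)) \<longlonglongrightarrow> 0))" using h by (elim conjE)
qed

lemma df_sub: assumes "dirichlet_form M D Q" "u \<in> D" shows "u \<in> L2 M"
  using dfc(1)[OF assms(1)] assms(2) by (rule subsetD)

lemma df_zero: "dirichlet_form M D Q \<Longrightarrow> (\<lambda>x. 0) \<in> D"
  by (rule dfc(3))

lemma df_lc:
  assumes "dirichlet_form M D Q" "u \<in> D" "v \<in> D"
  shows "lc a u b v \<in> D"
proof -
  note h1 = dfc(4)[OF assms(1)] and h2 = dfc(5)[OF assms(1)]
  have "(\<lambda>x. a * u x) \<in> D" using h2 assms(2) by blast
  moreover have "(\<lambda>x. b * v x) \<in> D" using h2 assms(3) by blast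
  ultimately have "(\<lambda>x. (\<lambda>x. a * u x) x + (\<lambda>x. b * v x) x) \<in> D" by (rule h1[rule_format])
  then show ?thesis unfolding lc_def by simp
qed

lemma df_Qlin: assumes "dirichlet_form M D Q" "u \<in> D" "v \<in> D" "w \<in> D" shows
   "Q (lc a u b v) w = a * Q u w + b * Q v w"
  unfolding lc_def using dfc(7)[OF assms(1)] assms(2-4) by blast

lemma df_Qsym: assumes "dirichlet_form M D Q" "u \<in> D" "v \<in> D" shows "Q u v = Q v u"
  using dfc(6)[OF assms(1)] assms(2-3) by blast

lemma df_Qpos: assumes "dirichlet_form M D Q" "u \<in> D" shows "Q u u \<ge> 0"
  using dfc(8)[OF assms(1)] assms(2) by blast

lemma df_sat: assumes "dirichlet_form M D Q" "u \<in> D" "v \<in> borel_measurable M" "(AE x in M. u x = v x)" shows "v \<in> D"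
  using dfc(2)[OF assms(1)] assms(2-4) by blast

lemma df_complete: assumes "dirichlet_form M D Q" "(\<forall>n. s n \<in> D)"
          "(\<forall>e>0. \<exists>N. \<forall>n\<ge>N. \<forall>k\<ge>N. form_normsq M Q (\<lambda>x. s n x - s k x) < e)"
   shows "(\<exists>u\<in>D. (\<lambda>n. form_normsq M Q (\<lambda>x. s n x - u x)) \<longlonglongrightarrow> 0)"
  using dfc(9)[OF assms(1)] assms(2-3) by blast

lemma abs_prod_le: "\<bar>a * b\<bar> \<le> a\<^sup>2 + b\<^sup>2" for a b :: real
proof -
  have "0 \<le> (\<bar>a\<bar> - \<bar>b\<bar>)\<^sup>2" by simp
  then have "2 * (\<bar>a\<bar> * \<bar>b\<bar>) \<le> a\<^sup>2 + b\<^sup>2" by (simp add: power2_diff)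
  moreover have "0 \<le> \<bar>a\<bar> * \<bar>b\<bar>" by simp
  moreover have "0 \<le> a\<^sup>2 + b\<^sup>2" by simp
  ultimately show ?thesis unfolding abs_mult by linarith
qed

lemma L2_int: "f \<in> L2 M \<Longrightarrow> g \<in> L2 M \<Longrightarrow> integrable M (\<lambda>x. f x * g x)"
  unfolding L2_def
  by (rule Bochner_Integration.integrable_bound[OF Bochner_Integration.integrable_add[of M "\<lambda>x. (f x)\<^sup>2" "\<lambda>x. (g x)\<^sup>2"]])
     (auto intro!: AE_I2 simp: abs_prod_le)

lemma BB_lin:
  assumes "dirichlet_form M D Q" "u \<in> D" "v \<in> D" "w \<in> D"
  shows "BB M Q (lc a u b v) w = a * BB M Q u w + b * BB M Q v w"
proof -
  have i1: "integrable M (\<lambda>x. u x * w x)" "integrable M (\<lambda>x. v x * w x)"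
    using assms by (auto intro!: L2_int df_sub)
  have "(\<integral>x. lc a u b v x * w x \<partial>M) = (\<integral>x. a * (u x * w x) + b * (v x * w x) \<partial>M)"
    by (simp add: lc_def algebra_simps)
  also have "\<dots> = a * (\<integral>x. u x * w x \<partial>M) + b * (\<integral>x. v x * w x \<partial>M)"
    using i1 by simp
  finally show ?thesis using df_Qlin[OF assms] unfolding BB_def by (simp add: algebra_simps)
qed

lemma BB_sym: "dirichlet_form M D Q \<Longrightarrow> u \<in> D \<Longrightarrow> v \<in> D \<Longrightarrow> BB M Q u v = BB M Q v u"
  unfolding BB_def using df_Qsym[of M D Q u v] by (simp add: mult.commute)

lemma BB_quad:
  assumes "dirichlet_form M D Q" "x \<in> D" "y \<in> D"
  shows "BB M Q (lc a x b y) (lc a x b y) = a\<^sup>2 * BB M Q x x + 2*a*b * BB M Q x y + b\<^sup>2 * BB M Q y y"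
proof -
  have z: "lc a x b y \<in> D" using df_lc assms by blast
  have "BB M Q (lc a x b y) (lc a x b y) = a * BB M Q x (lc a x b y) + b * BB M Q y (lc a x b y)"
    using BB_lin[OF assms z] .
  also have "BB M Q x (lc a x b y) = a * BB M Q x x + b * BB M Q y x"
    using BB_sym[OF assms(1) assms(2) z] BB_lin[OF assms assms(2)] by simp
  also have "BB M Q y (lc a x b y) = a * BB M Q x y + b * BB M Q y y"
    using BB_sym[OF assms(1) assms(3) z] BB_lin[OF assms assms(3)] by simp
  finally show ?thesis using BB_sym[OF assms] by (simp add: power2_eq_square algebra_simps)
qed

lemma BB_nonneg: "dirichlet_form M D Q \<Longrightarrow> u \<in> D \<Longrightarrow> BB M Q u u \<ge> 0"
proof -
  assume a: "dirichlet_form M D Q" "u \<in> D"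
  have "0 \<le> (\<integral>x. u x * u x \<partial>M)" by (intro integral_nonneg_AE) simp
  then show ?thesis unfolding BB_def using df_Qpos[OF a] by simp
qed

lemma fn_BB: "form_normsq M Q u = BB M Q u u"
  unfolding form_normsq_def BB_def l2_normsq_def by (simp add: power2_eq_square)

lemma quad_disc:
  fixes a b c :: real
  assumes "\<And>t. 0 \<le> c - 2*t*b + t\<^sup>2*a" "a \<ge> 0"
  shows "b\<^sup>2 \<le> a * c"
proof (cases "a = 0")
  case True
  show ?thesis
  proof (cases "b = 0")
    case False
    have "0 \<le> c - 2*((c+1)/(2*b))*b" using assms(1)[of "(c+1)/(2*b)"] True by simp
    then show ?thesis using False by simp
  qed (simp add: True)
next
  case False
  then have ap: "a > 0" using assms(2) by simp
  have "0 \<le> c - 2*(b/a)*b + (b/a)\<^sup>2*a" by (rule assms(1))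
  then have "0 \<le> c - b\<^sup>2/a" using ap by (simp add: power2_eq_square field_simps)
  then show ?thesis using ap by (simp add: field_simps)
qed

theorem mainTheorem2:
  fixes M :: "'a measure"
    and D Dsharp :: "('a \<Rightarrow> real) set"
    and Q Qsharp :: "('a \<Rightarrow> real) \<Rightarrow> ('a \<Rightarrow> real) \<Rightarrow> real"
  assumes "sigma_finite_measure M"
    and "dirichlet_form M D Q"
    and "dirichlet_form M Dsharp Qsharp"
    and "D \<subseteq> Dsharp"
    and "\<forall>u\<in>D. \<forall>v\<in>D. Qsharp u v = Q u v"
  shows "D = Dsharp \<longleftrightarrow>
    \<not> (\<exists>u. (u, (\<lambda>x. - u x)) \<in> Lprime_graph M D Dsharp Qsharp \<and> \<not> (AE x in M. u x = 0))"
proof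
  assume eq: "D = Dsharp"
  show "\<not> (\<exists>u. (u, (\<lambda>x. - u x)) \<in> Lprime_graph M D Dsharp Qsharp \<and> \<not> (AE x in M. u x = 0))"
  proof
    assume "\<exists>u. (u, (\<lambda>x. - u x)) \<in> Lprime_graph M D Dsharp Qsharp \<and> \<not> (AE x in M. u x = 0)"
    then obtain u where u: "u \<in> Dsharp" "\<forall>v\<in>D. Qsharp u v = l2_inner M (\<lambda>x. - u x) v"
      "\<not> (AE x in M. u x = 0)" by (auto simp: Lprime_graph_def)
    have uD: "u \<in> D" using u eq by simp
    have q: "Qsharp u u = - (\<integral>x. u x * u x \<partial>M)" using u(2) uD by (simp add: l2_inner_def)
    have "Qsharp u u \<ge> 0" using df_Qpos[OF assms(3) u(1)] .
    moreover have int: "integrable M (\<lambda>x. u x * u x)" using df_sub[OF assms(3) u(1)] by (intro L2_int)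
    moreover have "(\<integral>x. u x * u x \<partial>M) \<ge> 0" by (intro integral_nonneg_AE) simp
    ultimately have "(\<integral>x. u x * u x \<partial>M) = 0" using q by linarith
    then have "AE x in M. u x * u x = 0" using integral_nonneg_eq_0_iff_AE[OF int] by simp
    then have "AE x in M. u x = 0" by eventually_elim simp
    with u(3) show False by simp
  qed
next
  assume H: "\<not> (\<exists>u. (u, (\<lambda>x. - u x)) \<in> Lprime_graph M D Dsharp Qsharp \<and> \<not> (AE x in M. u x = 0))"
  show "D = Dsharp"
  proof (rule ccontr)
    assume "D \<noteq> Dsharp"
    then obtain w where w: "w \<in> Dsharp" "w \<notin> D" using assms(4) by blast
    have DDs: "\<And>v. v \<in> D \<Longrightarrow> v \<in> Dsharp" using assms(4) by blast
    note ds = assms(3)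
    let ?N = "\<lambda>f. BB M Qsharp f f"
    define S where "S = (\<lambda>v. ?N (lc 1 w (-1) v)) ` D"
    define d where "d = Inf S"
    have bdd: "bdd_below S" unfolding S_def
      by (rule bdd_belowI[of _ 0]) (use DDs w in \<open>auto intro!: BB_nonneg[OF ds] df_lc[OF ds]\<close>)
    have ne: "S \<noteq> {}" using df_zero[OF assms(2)] unfolding S_def by blast
    have low: "\<And>v. v\<in>D \<Longrightarrow> d \<le> ?N (lc 1 w (-1) v)"
      unfolding d_def S_def using bdd unfolding S_def by (intro cInf_lower) auto
    have "\<forall>n. \<exists>v\<in>D. ?N (lc 1 w (-1) v) < d + inverse (real (Suc n))"
    proof
      fix n
      have "Inf S < d + inverse (real (Suc n))" unfolding d_def by simp
      from cInf_lessD[OF ne this] show "\<exists>v\<in>D. ?N (lc 1 w (-1) v) < d + inverse (real (Suc n))"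
        unfolding S_def by blast
    qed
    then obtain s where s: "\<And>n. s n \<in> D" "\<And>n. ?N (lc 1 w (-1) (s n)) < d + inverse (real (Suc n))"
      by metis
    define a where "a n = lc 1 w (-1) (s n)" for n
    have aD: "\<And>n. a n \<in> Dsharp" unfolding a_def by (intro df_lc[OF ds] w DDs s)
    have sD: "\<And>n. s n \<in> Dsharp" using DDs s by blast
    have par: "?N (lc 1 (s n) (-1) (s k)) \<le> 2 * inverse (real (Suc n)) + 2 * inverse (real (Suc k))" for n k
    proof -
      have e1: "lc 1 (s n) (-1) (s k) = lc (-1) (a n) 1 (a k)"
        by (simp add: lc_def a_def fun_eq_iff)
      have e2: "lc 1 w (-1) (lc (1/2) (s n) (1/2) (s k)) = lc (1/2) (a n) (1/2) (a k)"
        by (simp add: lc_def a_def fun_eq_iff algebra_simps)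
      have "d \<le> ?N (lc (1/2) (a n) (1/2) (a k))"
        using low[of "lc (1/2) (s n) (1/2) (s k)"] e2 df_lc[OF assms(2) s(1) s(1)] by simp
      then have h: "d \<le> ?N (a n)/4 + BB M Qsharp (a n) (a k) / 2 + ?N (a k) / 4"
        using BB_quad[OF ds aD aD, of "1/2" n "1/2" k] by (simp add: power2_eq_square)
      have "?N (lc 1 (s n) (-1) (s k)) = ?N (a n) - 2 * BB M Qsharp (a n) (a k) + ?N (a k)"
        unfolding e1 using BB_quad[OF ds aD aD, of "-1" n 1 k] by simp
      then show ?thesis using h s(2)[of n] s(2)[of k] unfolding a_def by linarith
    qed
    have fnQ: "form_normsq M Q (lc 1 x (-1) y) = ?N (lc 1 x (-1) y)" if "x \<in> D" "y \<in> D" for x y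
    proof -
      have "lc 1 x (-1) y \<in> D" using df_lc[OF assms(2) that] .
      then show ?thesis unfolding fn_BB BB_def using assms(5) by simp
    qed
    have eqf: "(\<lambda>x. f x - g x) = lc 1 f (-1) g" for f g :: "'a \<Rightarrow> real"
      by (simp add: lc_def fun_eq_iff)
    have cauchy: "\<forall>e>0. \<exists>N. \<forall>n\<ge>N. \<forall>k\<ge>N. form_normsq M Q (\<lambda>x. s n x - s k x) < e"
    proof (intro allI impI)
      fix e :: real assume "e > 0"
      then obtain N where N: "inverse (real (Suc N)) < e/4" using reals_Archimedean
        by (metis divide_pos_pos zero_less_numeral)
      have "\<forall>n\<ge>N. \<forall>k\<ge>N. form_normsq M Q (\<lambda>x. s n x - s k x) < e"
      proof (intro allI impI)
        fix n k assume nk: "n \<ge> N" "k \<ge> N"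
        have "inverse (real (Suc n)) \<le> inverse (real (Suc N))" "inverse (real (Suc k)) \<le> inverse (real (Suc N))"
          using nk by (auto intro!: le_imp_inverse_le)
        then show "form_normsq M Q (\<lambda>x. s n x - s k x) < e"
          unfolding eqf fnQ[OF s(1) s(1)] using par[of n k] N by linarith
      qed
      then show "\<exists>N. \<forall>n\<ge>N. \<forall>k\<ge>N. form_normsq M Q (\<lambda>x. s n x - s k x) < e" by blast
    qed
    obtain u0 where u0: "u0 \<in> D" "(\<lambda>n. form_normsq M Q (\<lambda>x. s n x - u0 x)) \<longlonglongrightarrow> 0"
      using df_complete[OF assms(2)] s(1) cauchy by blast
    define e where "e n = lc 1 (s n) (-1) u0" for n
    have eD: "\<And>n. e n \<in> Dsharp" unfolding e_def by (intro df_lc[OF ds] sD DDs u0)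
    have elim: "(\<lambda>n. ?N (e n)) \<longlonglongrightarrow> 0"
      using u0(2) unfolding eqf fnQ[OF s(1) u0(1)] e_def .
    define u where "u = lc 1 w (-1) u0"
    have uD: "u \<in> Dsharp" unfolding u_def by (intro df_lc[OF ds] w DDs u0)
    have orth: "BB M Qsharp u v = 0" if vD: "v \<in> D" for v
    proof -
      have vs: "v \<in> Dsharp" using DDs vD .
      have Nv: "?N v \<ge> 0" using BB_nonneg[OF ds vs] .
      have bound: "(BB M Qsharp u v)\<^sup>2 \<le> 2 * ?N v * (inverse (real (Suc n)) + ?N (e n))" for n
      proof -
        have ue: "u = lc 1 (a n) 1 (e n)" by (simp add: u_def a_def e_def lc_def fun_eq_iff)
        have B: "BB M Qsharp u v = BB M Qsharp (a n) v + BB M Qsharp (e n) v"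
          unfolding ue using BB_lin[OF ds aD eD vs] by simp
        have A1: "(BB M Qsharp (a n) v)\<^sup>2 \<le> ?N v * (?N (a n) - d)"
        proof (rule quad_disc[OF _ Nv])
          fix t
          have "lc 1 (a n) (-t) v = lc 1 w (-1) (lc 1 (s n) t v)"
            by (simp add: a_def lc_def fun_eq_iff algebra_simps)
          then have "d \<le> ?N (lc 1 (a n) (-t) v)" using low[OF df_lc[OF assms(2) s(1) vD]] by simp
          then show "0 \<le> ?N (a n) - d - 2*t*BB M Qsharp (a n) v + t\<^sup>2 * ?N v"
            using BB_quad[OF ds aD vs, of 1 n "-t"] by simp
        qed
        have "?N (a n) - d \<le> inverse (real (Suc n))" using s(2)[of n] unfolding a_def by simp
        then have A: "(BB M Qsharp (a n) v)\<^sup>2 \<le> ?N v * inverse (real (Suc n))"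
          using A1 Nv by (meson mult_left_mono order_trans)
        have E: "(BB M Qsharp (e n) v)\<^sup>2 \<le> ?N v * ?N (e n)"
        proof (rule quad_disc[OF _ Nv])
          fix t
          have "0 \<le> ?N (lc 1 (e n) (-t) v)" by (intro BB_nonneg[OF ds] df_lc[OF ds] eD vs)
          then show "0 \<le> ?N (e n) - 2*t*BB M Qsharp (e n) v + t\<^sup>2 * ?N v"
            using BB_quad[OF ds eD vs, of 1 n "-t"] by simp
        qed
        have sq: "(x + y)\<^sup>2 \<le> 2*x\<^sup>2 + 2*y\<^sup>2" for x y :: real
        proof -
          have "0 \<le> (x - y)\<^sup>2" by simp
          then show ?thesis by (simp add: power2_diff power2_sum)
        qed
        show ?thesis unfolding B using sq[of "BB M Qsharp (a n) v" "BB M Qsharp (e n) v"] A E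
          by (simp add: algebra_simps)
      qed
      have lim: "(\<lambda>n. 2 * ?N v * (inverse (real (Suc n)) + ?N (e n))) \<longlonglongrightarrow> 2 * ?N v * (0 + 0)"
        by (intro tendsto_intros elim LIMSEQ_inverse_real_of_nat)
      have "(BB M Qsharp u v)\<^sup>2 \<le> 2 * ?N v * (0 + 0)"
        by (rule LIMSEQ_le_const[OF lim]) (use bound in blast)
      then show ?thesis by simp
    qed
    have uL2: "(\<lambda>x. - u x) \<in> L2 M"
    proof -
      have "lc (-1) u 0 u \<in> Dsharp" by (intro df_lc[OF ds] uD)
      moreover have "lc (-1) u 0 u = (\<lambda>x. - u x)" by (simp add: lc_def fun_eq_iff)
      ultimately show ?thesis using df_sub[OF ds] by metis
    qed
    have graph: "(u, (\<lambda>x. - u x)) \<in> Lprime_graph M D Dsharp Qsharp"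
    proof -
      have "\<forall>v\<in>D. Qsharp u v = l2_inner M (\<lambda>x. - u x) v"
      proof
        fix v assume "v \<in> D"
        from orth[OF this] have "Qsharp u v + (\<integral>x. u x * v x \<partial>M) = 0" by (simp add: BB_def)
        then show "Qsharp u v = l2_inner M (\<lambda>x. - u x) v" by (simp add: l2_inner_def)
      qed
      then show ?thesis unfolding Lprime_graph_def using uD uL2 by simp
    qed
    have "\<not> (AE x in M. u x = 0)"
    proof
      assume "AE x in M. u x = 0"
      then have "AE x in M. u0 x = w x" by eventually_elim (simp add: u_def lc_def)
      moreover have "w \<in> borel_measurable M" using df_sub[OF ds w(1)] by (simp add: L2_def)
      ultimately have "w \<in> D" using df_sat[OF assms(2) u0(1)] by blast
      with w(2) show False by simp
    qed
    with graph H show False by blast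
  qed
qed

end
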